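(* Let $k$ be an algebraically closed field, $Y\subseteq k^n$ an algebraic set with radical ideal $\mathfrak a=I(Y)\subseteq P=k[X_1,\ldots,X_n]$, coordinate ring $R=P/\mathfrak a$, and $x=(x_1,\ldots,x_n)$ the coordinate functions (images of $X_i$) in $R$, regarded as acting on the $R$-module $R$. Then $\sigma_{\mathrm p}(x,R)$ equals the set $Y_{is}$ of isolated points of $Y$. If $q=(q_1,\ldots,q_m)$ are polynomials in $P$ such that $R$ is integral over $k[q(x)]$ (so $q:Y\to k^m$ is a finite morphism), then $\sigma(q(x),R)=q(Y)$ and $\sigma_{\mathrm p}(q(x),R)=q(Y_{is})$.
   Context: For a commutative $k$-algebra $R$, an $R$-module $M$ and an $n$-tuple $y$ in $R$, the Koszul complex $\operatorname{Kos}(y,M)$ is $0\leftarrow M\leftarrow M\otimes_k\wedge^1k^n\leftarrow\cdots\leftarrow M\otimes_k\wedge^nk^n\leftarrow 0$ with differential $\partial(u\otimes e_{i_1}\wedge\cdots\wedge e_{i_p})=\sum_{s=1}^p(-1)^{s+1}y_{i_s}u\otimes e_{i_1}\wedge\cdots\wedge\widehat{e_{i_s}}\wedge\cdots\wedge e_{i_p}$, with homology $H_p(y,M)$. For $a\in k^n$, $y-a=(y_1-a_1,\ldots,y_n-a_n)$. Taylor spectrum $\sigma(y,M)$: the set of $a\in k^n$ with $\operatorname{Kos}(y-a,M)$ not exact. Point spectrum $\sigma_{\mathrm p}(y,M)$: the set of $a\in k^n$ with $H_n(y-a,M)\neq0$ (joint eigenvalues). *)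

theory Defs
  imports "HOL-Computational_Algebra.Polynomial" "HOL-Library.Function_Algebras"
begin

definition alg_closed :: "'k::field itself \<Rightarrow> bool" where
  "alg_closed _ \<longleftrightarrow> (\<forall>p :: 'k poly. degree p > 0 \<longrightarrow> (\<exists>z. poly p z = 0))"

text \<open>Points of k^n are functions nat => k vanishing at indices >= n.\<close>
definition kspace :: "nat \<Rightarrow> (nat \<Rightarrow> 'k::zero) set" where
  "kspace n = {a. \<forall>i\<ge>n. a i = 0}"

text \<open>Polynomial functions k^n -> k in the variables X_0,...,X_(n-1)
  (for infinite k, e.g. algebraically closed k, these are exactly the polynomials).\<close>
inductive_set polyfun :: "nat \<Rightarrow> ((nat \<Rightarrow> 'k::comm_ring_1) \<Rightarrow> 'k) set" for n where
  const: "(\<lambda>v. c) \<in> polyfun n"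
| var: "i < n \<Longrightarrow> (\<lambda>v. v i) \<in> polyfun n"
| add: "f \<in> polyfun n \<Longrightarrow> g \<in> polyfun n \<Longrightarrow> (\<lambda>v. f v + g v) \<in> polyfun n"
| mult: "f \<in> polyfun n \<Longrightarrow> g \<in> polyfun n \<Longrightarrow> (\<lambda>v. f v * g v) \<in> polyfun n"

definition zero_set :: "nat \<Rightarrow> ((nat \<Rightarrow> 'k::comm_ring_1) \<Rightarrow> 'k) set \<Rightarrow> (nat \<Rightarrow> 'k) set" where
  "zero_set n F = {v \<in> kspace n. \<forall>f\<in>F. f v = 0}"

definition algebraic_set :: "nat \<Rightarrow> (nat \<Rightarrow> 'k::comm_ring_1) set \<Rightarrow> bool" where
  "algebraic_set n Y \<longleftrightarrow> (\<exists>F \<subseteq> polyfun n. Y = zero_set n F)"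

text \<open>Isolated points (in the Zariski topology) of Y.\<close>
definition isolated_points :: "nat \<Rightarrow> (nat \<Rightarrow> 'k::comm_ring_1) set \<Rightarrow> (nat \<Rightarrow> 'k) set" where
  "isolated_points n Y = {y \<in> Y. algebraic_set n (Y - {y})}"

text \<open>Restriction of a function to Y (zero outside Y); the coordinate ring
  R = P / I(Y) is represented as the ring of restrictions of polynomial functions to Y.\<close>
definition restr :: "(nat \<Rightarrow> 'k) set \<Rightarrow> ((nat \<Rightarrow> 'k) \<Rightarrow> 'k::zero) \<Rightarrow> (nat \<Rightarrow> 'k) \<Rightarrow> 'k" where
  "restr Y f = (\<lambda>v. if v \<in> Y then f v else 0)"

definition coord_ring :: "nat \<Rightarrow> (nat \<Rightarrow> 'k) set \<Rightarrow> ((nat \<Rightarrow> 'k::comm_ring_1) \<Rightarrow> 'k) set" where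
  "coord_ring n Y = {restr Y p | p. p \<in> polyfun n}"

definition polymap :: "nat \<Rightarrow> (nat \<Rightarrow> (nat \<Rightarrow> 'k) \<Rightarrow> 'k::zero) \<Rightarrow> (nat \<Rightarrow> 'k) \<Rightarrow> nat \<Rightarrow> 'k" where
  "polymap m q v = (\<lambda>j. if j < m then q j v else 0)"

definition gen_subalg :: "nat \<Rightarrow> (nat \<Rightarrow> 'k) set \<Rightarrow> nat \<Rightarrow> (nat \<Rightarrow> (nat \<Rightarrow> 'k) \<Rightarrow> 'k)
    \<Rightarrow> ((nat \<Rightarrow> 'k::comm_ring_1) \<Rightarrow> 'k) set" where
  "gen_subalg n Y m q = {restr Y (\<lambda>v. g (polymap m q v)) | g. g \<in> polyfun m}"

definition integral_over :: "(nat \<Rightarrow> 'k) set \<Rightarrow> ((nat \<Rightarrow> 'k) \<Rightarrow> 'k) set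
    \<Rightarrow> ((nat \<Rightarrow> 'k::comm_ring_1) \<Rightarrow> 'k) set \<Rightarrow> bool" where
  "integral_over Y R A \<longleftrightarrow> (\<forall>r\<in>R. \<exists>d c. (\<forall>j<d. c j \<in> A) \<and>
      (\<forall>v\<in>Y. r v ^ d + (\<Sum>j<d. c j v * r v ^ j) = 0))"

text \<open>Chains of degree p: M \<otimes> \<wedge>^p k^n, identified with functions from p-subsets
  S of {0..<n} (basis e_S, indices in increasing order) to M.\<close>
definition kchains :: "'m set \<Rightarrow> nat \<Rightarrow> nat \<Rightarrow> (nat set \<Rightarrow> 'm::zero) set" where
  "kchains M n p = {c. (\<forall>S. c S \<in> M) \<and> (\<forall>S. \<not> (S \<subseteq> {..<n} \<and> card S = p) \<longrightarrow> c S = 0)}"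

text \<open>Differential: the coefficient of e_S in d(c) is the sum over i not in S of
  (-1)^(s+1) y_i c(S+i), where s is the (1-based) position of i in S+i,
  so (-1)^(s+1) = (-1)^(number of j in S with j < i).\<close>
definition kd :: "('r \<Rightarrow> 'm \<Rightarrow> 'm) \<Rightarrow> (nat \<Rightarrow> 'r) \<Rightarrow> nat \<Rightarrow> (nat set \<Rightarrow> 'm::ab_group_add)
    \<Rightarrow> nat set \<Rightarrow> 'm" where
  "kd smul y n c = (\<lambda>S. if S \<subseteq> {..<n} then
      (\<Sum>i\<in>{..<n} - S. (if even (card {j\<in>S. j < i}) then smul (y i) (c (insert i S))
                           else - smul (y i) (c (insert i S))))
    else 0)"

definition koszul_cycles :: "'m set \<Rightarrow> ('r \<Rightarrow> 'm \<Rightarrow> 'm) \<Rightarrow> (nat \<Rightarrow> 'r) \<Rightarrow> nat \<Rightarrow> nat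
    \<Rightarrow> (nat set \<Rightarrow> 'm::ab_group_add) set" where
  "koszul_cycles M smul y n p = {c \<in> kchains M n p. kd smul y n c = (\<lambda>_. 0)}"

definition koszul_boundaries :: "'m set \<Rightarrow> ('r \<Rightarrow> 'm \<Rightarrow> 'm) \<Rightarrow> (nat \<Rightarrow> 'r) \<Rightarrow> nat \<Rightarrow> nat
    \<Rightarrow> (nat set \<Rightarrow> 'm::ab_group_add) set" where
  "koszul_boundaries M smul y n p = kd smul y n ` kchains M n (Suc p)"

definition koszul_homology_nonzero :: "'m::ab_group_add set \<Rightarrow> ('r \<Rightarrow> 'm \<Rightarrow> 'm) \<Rightarrow> (nat \<Rightarrow> 'r) \<Rightarrow> nat \<Rightarrow> nat
    \<Rightarrow> bool" where
  "koszul_homology_nonzero M smul y n p \<longleftrightarrow>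
     koszul_cycles M smul y n p \<noteq> koszul_boundaries M smul y n p"

definition koszul_exact :: "'m::ab_group_add set \<Rightarrow> ('r \<Rightarrow> 'm \<Rightarrow> 'm) \<Rightarrow> (nat \<Rightarrow> 'r) \<Rightarrow> nat \<Rightarrow> bool" where
  "koszul_exact M smul y n \<longleftrightarrow> (\<forall>p\<le>n. \<not> koszul_homology_nonzero M smul y n p)"

definition taylor_spectrum :: "'m::ab_group_add set \<Rightarrow> ('r::ab_group_add \<Rightarrow> 'm \<Rightarrow> 'm)
    \<Rightarrow> ('k::zero \<Rightarrow> 'r) \<Rightarrow> (nat \<Rightarrow> 'r) \<Rightarrow> nat \<Rightarrow> (nat \<Rightarrow> 'k) set" where
  "taylor_spectrum M smul alg y n =
     {a \<in> kspace n. \<not> koszul_exact M smul (\<lambda>i. y i - alg (a i)) n}"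

definition point_spectrum :: "'m::ab_group_add set \<Rightarrow> ('r::ab_group_add \<Rightarrow> 'm \<Rightarrow> 'm)
    \<Rightarrow> ('k::zero \<Rightarrow> 'r) \<Rightarrow> (nat \<Rightarrow> 'r) \<Rightarrow> nat \<Rightarrow> (nat \<Rightarrow> 'k) set" where
  "point_spectrum M smul alg y n =
     {a \<in> kspace n. koszul_homology_nonzero M smul (\<lambda>i. y i - alg (a i)) n n}"

end

theory Submission
  imports Defs "HOL-Library.FuncSet"
begin


lemma sum_fun_apply: "(sum f A) x = (\<Sum>a\<in>A. f a x)"
  by (induction A rule: infinite_finite_induct) auto

lemma polyfun_neg: "f \<in> polyfun n \<Longrightarrow> (\<lambda>v. - f v) \<in> polyfun n"
proof -
  assume f: "f \<in> polyfun n"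
  have "(\<lambda>v. (-1) * f v) \<in> polyfun n" by (rule polyfun.mult[OF polyfun.const f])
  then show ?thesis by simp
qed

lemma polyfun_diff: "f \<in> polyfun n \<Longrightarrow> g \<in> polyfun n \<Longrightarrow> (\<lambda>v. f v - g v) \<in> polyfun n"
  using polyfun.add[OF _ polyfun_neg] by (simp only: diff_conv_add_uminus) blast

lemma polyfun_sum: "(\<And>i. i \<in> A \<Longrightarrow> f i \<in> polyfun n) \<Longrightarrow> (\<lambda>v. \<Sum>i\<in>A. f i v) \<in> polyfun n"
  by (induction A rule: infinite_finite_induct) (auto intro: polyfun.intros)

lemma polyfun_prod_list: "(\<And>b. b \<in> set bs \<Longrightarrow> f b \<in> polyfun n) \<Longrightarrow> (\<lambda>v. \<Prod>b\<leftarrow>bs. f b v) \<in> polyfun n"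
  by (induction bs) (auto intro: polyfun.intros)

lemma polyfun_compose:
  assumes "g \<in> polyfun m" "\<And>i. i < m \<Longrightarrow> (\<lambda>v. \<phi> v i) \<in> polyfun n"
  shows "(\<lambda>v. g (\<phi> v)) \<in> polyfun n"
  using assms(1) by induction (auto intro: polyfun.intros assms(2))

lemma polyfun_power: "f \<in> polyfun n \<Longrightarrow> (\<lambda>v. f v ^ d) \<in> polyfun n"
  by (induction d) (auto intro: polyfun.intros)

lemma restr_in: "p \<in> polyfun n \<Longrightarrow> restr Y p \<in> coord_ring n Y"
  unfolding coord_ring_def by blast

lemma coord_ring_zero_out: "u \<in> coord_ring n Y \<Longrightarrow> v \<notin> Y \<Longrightarrow> u v = 0"
  unfolding coord_ring_def restr_def by auto

lemma coord_ring_0: "(0 :: _ \<Rightarrow> 'k::comm_ring_1) \<in> coord_ring n Y"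
proof -
  have "restr Y (\<lambda>v. 0::'k) = 0" by (auto simp: restr_def)
  then show ?thesis using restr_in[OF polyfun.const[of 0 n], of Y] by simp
qed

lemma coord_ring_add: "f \<in> coord_ring n Y \<Longrightarrow> g \<in> coord_ring n Y \<Longrightarrow> f + g \<in> coord_ring n Y"
proof -
  assume "f \<in> coord_ring n Y" "g \<in> coord_ring n Y"
  then obtain p r where p: "p \<in> polyfun n" "f = restr Y p" and r: "r \<in> polyfun n" "g = restr Y r"
    unfolding coord_ring_def by blast
  have "f + g = restr Y (\<lambda>v. p v + r v)" using p r by (auto simp: restr_def)
  then show ?thesis using restr_in[OF polyfun.add[OF p(1) r(1)]] by simp
qed

lemma coord_ring_mult: "f \<in> coord_ring n Y \<Longrightarrow> g \<in> coord_ring n Y \<Longrightarrow> (\<lambda>v. f v * g v) \<in> coord_ring n Y"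
proof -
  assume "f \<in> coord_ring n Y" "g \<in> coord_ring n Y"
  then obtain p r where p: "p \<in> polyfun n" "f = restr Y p" and r: "r \<in> polyfun n" "g = restr Y r"
    unfolding coord_ring_def by blast
  have "(\<lambda>v. f v * g v) = restr Y (\<lambda>v. p v * r v)" using p r by (auto simp: restr_def)
  then show ?thesis using restr_in[OF polyfun.mult[OF p(1) r(1)]] by simp
qed

lemma coord_ring_neg: "f \<in> coord_ring n Y \<Longrightarrow> - f \<in> coord_ring n Y"
proof -
  assume "f \<in> coord_ring n Y"
  then obtain p where p: "p \<in> polyfun n" "f = restr Y p" unfolding coord_ring_def by blast
  have "- f = restr Y (\<lambda>v. - p v)" using p by (auto simp: restr_def)
  then show ?thesis using restr_in[OF polyfun_neg[OF p(1)]] by simp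
qed

lemma coord_ring_sum: "(\<And>i. i \<in> A \<Longrightarrow> f i \<in> coord_ring n Y) \<Longrightarrow> sum f A \<in> coord_ring n Y"
  by (induction A rule: infinite_finite_induct) (auto intro: coord_ring_0 coord_ring_add)

definition sg :: "nat \<Rightarrow> nat set \<Rightarrow> 'k::comm_ring_1" where
  "sg i S = (-1) ^ card {j\<in>S. j < i}"

definition kds :: "(nat \<Rightarrow> 'k::comm_ring_1) \<Rightarrow> nat \<Rightarrow> (nat set \<Rightarrow> 'k) \<Rightarrow> nat set \<Rightarrow> 'k" where
  "kds y m c S = (if S \<subseteq> {..<m} then (\<Sum>i\<in>{..<m} - S. sg i S * y i * c (insert i S)) else 0)"

lemma kd_apply:
  "kd (\<lambda>f g v. f v * g v) y m c S v = kds (\<lambda>i. y i v) m (\<lambda>T. c T v) S"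
  unfolding kd_def kds_def sg_def
  by (auto simp: sum_fun_apply intro!: sum.cong)



lemma sg_insert:
  assumes "finite S" "i \<notin> S"
  shows "sg j (insert i S) = (if i < j then - sg j S else (sg j S :: 'k::comm_ring_1))"
proof (cases "i < j")
  case True
  then have "{l\<in>insert i S. l < j} = insert i {l\<in>S. l < j}" by auto
  moreover have "card (insert i {l\<in>S. l < j}) = Suc (card {l\<in>S. l < j})"
    using assms by simp
  ultimately show ?thesis using True by (simp add: sg_def)
next
  case False
  then have "{l\<in>insert i S. l < j} = {l\<in>S. l < j}" by auto
  then show ?thesis using False by (simp add: sg_def)
qed

lemma sg_sq: "sg i S * sg i S = (1::'k::comm_ring_1)"
  by (simp add: sg_def flip: power_add)

lemma antisym_sum_zero:
  fixes F :: "nat \<Rightarrow> nat \<Rightarrow> 'k::comm_ring_1"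
  assumes "finite A" "\<And>i j. i \<in> A \<Longrightarrow> j \<in> A \<Longrightarrow> i \<noteq> j \<Longrightarrow> F j i = - F i j"
  shows "(\<Sum>i\<in>A. \<Sum>j\<in>A - {i}. F i j) = 0"
proof -
  have "(\<Sum>i\<in>A. \<Sum>j\<in>A - {i}. F i j) = (\<Sum>i\<in>A. \<Sum>j\<in>A. (if j < i then F i j else 0) + (if i < j then F i j else 0))"
  proof (rule sum.cong[OF refl])
    fix i assume i: "i \<in> A"
    have "(\<Sum>j\<in>A - {i}. F i j) = (\<Sum>j\<in>A. if j \<noteq> i then F i j else 0)"
    proof -
      have "A - {i} = {j\<in>A. j \<noteq> i}" by auto
      then show ?thesis by (simp add: sum.inter_filter assms(1))
    qed
    also have "\<dots> = (\<Sum>j\<in>A. (if j < i then F i j else 0) + (if i < j then F i j else 0))"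
      by (rule sum.cong) auto
    finally show "(\<Sum>j\<in>A - {i}. F i j) = \<dots>" .
  qed
  also have "\<dots> = (\<Sum>i\<in>A. \<Sum>j\<in>A. if j < i then F i j else 0) + (\<Sum>i\<in>A. \<Sum>j\<in>A. if i < j then F i j else 0)"
    by (simp add: sum.distrib)
  also have "(\<Sum>i\<in>A. \<Sum>j\<in>A. if i < j then F i j else 0) = (\<Sum>j\<in>A. \<Sum>i\<in>A. if i < j then F i j else 0)"
    by (rule sum.swap)
  also have "\<dots> = (\<Sum>i\<in>A. \<Sum>j\<in>A. if j < i then - F i j else 0)"
    apply (intro sum.cong refl)
    subgoal for i j using assms(2)[of i j] by (cases "j < i") auto
    done
  also have "\<dots> = - (\<Sum>i\<in>A. \<Sum>j\<in>A. if j < i then F i j else 0)"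
  proof -
    have "(\<Sum>i\<in>A. \<Sum>j\<in>A. if j < i then - F i j else 0) = (\<Sum>i\<in>A. \<Sum>j\<in>A. - (if j < i then F i j else 0))"
      by (intro sum.cong refl) simp
    then show ?thesis by (simp only: sum_negf)
  qed
  finally show ?thesis by simp
qed

lemma kds_kds: "kds y m (kds y m c) S = 0"
proof (cases "S \<subseteq> {..<m}")
  case False then show ?thesis by (simp add: kds_def)
next
  case True
  have fS: "finite S" using True finite_subset by blast
  define A where "A = {..<m} - S"
  define F where "F i j = sg i S * sg j (insert i S) * y i * y j * c (insert j (insert i S))" for i j
  have "kds y m (kds y m c) S = (\<Sum>i\<in>A. sg i S * y i * (\<Sum>j\<in>A - {i}. sg j (insert i S) * y j * c (insert j (insert i S))))"
  proof -
    have "kds y m (kds y m c) S = (\<Sum>i\<in>A. sg i S * y i * kds y m c (insert i S))"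
      using True by (simp add: kds_def A_def)
    also have "\<dots> = (\<Sum>i\<in>A. sg i S * y i * (\<Sum>j\<in>A - {i}. sg j (insert i S) * y j * c (insert j (insert i S))))"
    proof (rule sum.cong[OF refl])
      fix i assume "i \<in> A"
      then have "insert i S \<subseteq> {..<m}" "{..<m} - insert i S = A - {i}" using True by (auto simp: A_def)
      then show "sg i S * y i * kds y m c (insert i S) = sg i S * y i * (\<Sum>j\<in>A - {i}. sg j (insert i S) * y j * c (insert j (insert i S)))"
        by (simp add: kds_def)
    qed
    finally show ?thesis .
  qed
  also have "\<dots> = (\<Sum>i\<in>A. \<Sum>j\<in>A - {i}. F i j)"
    by (simp add: F_def sum_distrib_left mult_ac)
  also have "\<dots> = 0"
  proof (rule antisym_sum_zero)
    show "finite A" by (simp add: A_def)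
    fix i j assume ij: "i \<in> A" "j \<in> A" "i \<noteq> j"
    then have "i \<notin> S" "j \<notin> S" by (auto simp: A_def)
    then show "F j i = - F i j" using ij(3)
    proof -
      have e: "insert i (insert j S) = insert j (insert i S)" by blast
      show ?thesis
        using ij(3) \<open>i \<notin> S\<close> \<open>j \<notin> S\<close>
        unfolding F_def e sg_insert[OF fS \<open>i \<notin> S\<close>] sg_insert[OF fS \<open>j \<notin> S\<close>]
        by (cases "i < j") (simp_all add: mult_ac)
    qed
  qed
  finally show ?thesis .
qed



definition hs :: "(nat \<Rightarrow> 'k::comm_ring_1) \<Rightarrow> nat \<Rightarrow> (nat set \<Rightarrow> 'k) \<Rightarrow> nat set \<Rightarrow> 'k" where
  "hs g m c S = (if S \<subseteq> {..<m} then (\<Sum>i\<in>S. sg i (S - {i}) * g i * c (S - {i})) else 0)"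

lemma kds_hs:
  assumes SN: "S \<subseteq> {..<m}"
  shows "kds y m (hs g m c) S + hs g m (kds y m c) S = (\<Sum>i<m. g i * y i) * c S"
proof -
  have fS: "finite S" using SN finite_subset by blast
  define A where "A = {..<m} - S"
  have fA: "finite A" by (simp add: A_def)
  define X where "X i j = sg i S * sg j (insert i S - {j}) * y i * g j * c (insert i (S - {j}))" for i j
  define Z where "Z j i = sg j (S - {j}) * sg i (S - {j}) * g j * y i * c (insert i (S - {j}))" for j i
  have 1: "kds y m (hs g m c) S = (\<Sum>i\<in>A. y i * g i * c S + (\<Sum>j\<in>S. X i j))"
  proof -
    have "kds y m (hs g m c) S = (\<Sum>i\<in>A. sg i S * y i * hs g m c (insert i S))"
      using SN by (simp add: kds_def A_def)
    also have "\<dots> = (\<Sum>i\<in>A. y i * g i * c S + (\<Sum>j\<in>S. X i j))"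
    proof (rule sum.cong[OF refl])
      fix i assume i: "i \<in> A"
      then have iS: "i \<notin> S" and iN: "insert i S \<subseteq> {..<m}" using SN by (auto simp: A_def)
      have "hs g m c (insert i S) = (\<Sum>j\<in>insert i S. sg j (insert i S - {j}) * g j * c (insert i S - {j}))"
        using iN by (simp add: hs_def)
      also have "\<dots> = sg i S * g i * c S + (\<Sum>j\<in>S. sg j (insert i S - {j}) * g j * c (insert i S - {j}))"
        using fS iS by (simp add: sum.insert)
      finally have h: "hs g m c (insert i S) = \<dots>" .
      have e: "\<And>j. j \<in> S \<Longrightarrow> insert i S - {j} = insert i (S - {j})" using iS by blast
      show "sg i S * y i * hs g m c (insert i S) = y i * g i * c S + (\<Sum>j\<in>S. X i j)"
        unfolding h X_def
        by (simp add: algebra_simps sum_distrib_left sg_sq e cong: sum.cong)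
    qed
    finally show ?thesis .
  qed
  have 2: "hs g m (kds y m c) S = (\<Sum>j\<in>S. g j * y j * c S + (\<Sum>i\<in>A. Z j i))"
  proof -
    have "hs g m (kds y m c) S = (\<Sum>j\<in>S. sg j (S - {j}) * g j * kds y m c (S - {j}))"
      using SN by (simp add: hs_def)
    also have "\<dots> = (\<Sum>j\<in>S. g j * y j * c S + (\<Sum>i\<in>A. Z j i))"
    proof (rule sum.cong[OF refl])
      fix j assume j: "j \<in> S"
      have jN: "S - {j} \<subseteq> {..<m}" using SN by auto
      have eN: "{..<m} - (S - {j}) = insert j A" using SN j by (auto simp: A_def)
      have jA: "j \<notin> A" using j by (simp add: A_def)
      have "kds y m c (S - {j}) = (\<Sum>i\<in>insert j A. sg i (S - {j}) * y i * c (insert i (S - {j})))"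
        using jN eN by (simp add: kds_def)
      also have "\<dots> = sg j (S - {j}) * y j * c S + (\<Sum>i\<in>A. sg i (S - {j}) * y i * c (insert i (S - {j})))"
        using fA jA j by (simp add: sum.insert insert_absorb)
      finally have h: "kds y m c (S - {j}) = \<dots>" .
      show "sg j (S - {j}) * g j * kds y m c (S - {j}) = g j * y j * c S + (\<Sum>i\<in>A. Z j i)"
        unfolding h Z_def
        by (simp add: algebra_simps sum_distrib_left)
           (simp add: mult.assoc[symmetric] sg_sq mult.commute[of "sg j (S - {j})"])
    qed
    finally show ?thesis .
  qed
  have XZ: "X i j = - Z j i" if "i \<in> A" "j \<in> S" for i j
  proof -
    have iT: "i \<notin> S - {j}" and jT: "j \<notin> S - {j}" and ij: "i \<noteq> j" using that by (auto simp: A_def)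
    have fT: "finite (S - {j})" using fS by simp
    have eS: "S = insert j (S - {j})" using that by blast
    have e2: "insert i S - {j} = insert i (S - {j})" using ij by blast
    have s1: "sg i S = (if j < i then - sg i (S - {j}) else (sg i (S - {j}) :: 'a))"
      by (subst eS, rule sg_insert[OF fT jT])
    have s2: "sg j (insert i S - {j}) = (if i < j then - sg j (S - {j}) else (sg j (S - {j}) :: 'a))"
      unfolding e2 by (rule sg_insert[OF fT iT])
    show ?thesis unfolding X_def Z_def s1 s2 using ij
      by (cases "i < j") (simp_all add: mult_ac)
  qed
  have "kds y m (hs g m c) S + hs g m (kds y m c) S
      = ((\<Sum>i\<in>A. g i * y i * c S) + (\<Sum>j\<in>S. g j * y j * c S)) + ((\<Sum>i\<in>A. \<Sum>j\<in>S. X i j) + (\<Sum>j\<in>S. \<Sum>i\<in>A. Z j i))"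
    unfolding 1 2 by (simp add: sum.distrib mult_ac)
  also have "(\<Sum>j\<in>S. \<Sum>i\<in>A. Z j i) = (\<Sum>i\<in>A. \<Sum>j\<in>S. Z j i)" by (rule sum.swap)
  also have "(\<Sum>i\<in>A. \<Sum>j\<in>S. X i j) + (\<Sum>i\<in>A. \<Sum>j\<in>S. Z j i) = 0"
  proof -
    have "(\<Sum>i\<in>A. \<Sum>j\<in>S. X i j) = (\<Sum>i\<in>A. \<Sum>j\<in>S. - Z j i)"
      by (intro sum.cong refl) (simp add: XZ)
    then show ?thesis by (simp add: sum_negf)
  qed
  also have "(\<Sum>i\<in>A. g i * y i * c S) + (\<Sum>j\<in>S. g j * y j * c S) = (\<Sum>i\<in>A \<union> S. g i * y i * c S)"
    by (rule sum.union_disjoint[symmetric]) (auto simp: fA fS A_def)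
  also have "A \<union> S = {..<m}" using SN by (auto simp: A_def)
  finally show ?thesis by (simp add: sum_distrib_right)
qed



abbreviation "smul \<equiv> (\<lambda>f g (v::'a). f v * (g v :: 'k::comm_ring_1))"

lemma coord_ring_scale: "u \<in> coord_ring n Y \<Longrightarrow> (\<lambda>v. s * u v) \<in> coord_ring n Y"
proof -
  assume "u \<in> coord_ring n Y"
  then obtain p where p: "p \<in> polyfun n" "u = restr Y p" unfolding coord_ring_def by blast
  have "(\<lambda>v. s * u v) = restr Y (\<lambda>v. s * p v)" using p by (auto simp: restr_def)
  then show ?thesis using restr_in[OF polyfun.mult[OF polyfun.const p(1)]] by simp
qed

lemma kd_in_kchains:
  assumes y: "\<And>i. i < m \<Longrightarrow> y i \<in> coord_ring n Y"
    and c: "c \<in> kchains (coord_ring n Y) m (Suc p)"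
  shows "kd smul y m c \<in> kchains (coord_ring n Y) m p"
proof -
  have cS: "c S \<in> coord_ring n Y" for S using c by (simp add: kchains_def)
  have val: "kd smul y m c S \<in> coord_ring n Y" for S
    unfolding kd_def
    by (auto intro!: coord_ring_sum coord_ring_mult coord_ring_neg y cS coord_ring_0)
  have supp: "kd smul y m c S = 0" if "\<not> (S \<subseteq> {..<m} \<and> card S = p)" for S
  proof (rule ext)
    fix v
    show "kd smul y m c S v = 0 v"
    proof (cases "S \<subseteq> {..<m}")
      case False then show ?thesis by (simp add: kd_apply kds_def)
    next
      case True
      then have fS: "finite S" using finite_subset by blast
      have "card S \<noteq> p" using that True by auto
      then have "c (insert i S) = 0" if "i \<in> {..<m} - S" for i
        using c that fS True by (simp add: kchains_def)
      then show ?thesis using True by (simp add: kd_apply kds_def)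
    qed
  qed
  show ?thesis using val supp by (simp add: kchains_def)
qed

lemma kd_kd: "kd smul y m (kd smul y m c) = (\<lambda>_. 0)"
proof (intro ext)
  fix S v
  have "(\<lambda>T. kd smul y m c T v) = kds (\<lambda>i. y i v) m (\<lambda>T. c T v)"
    by (rule ext) (simp add: kd_apply)
  then show "kd smul y m (kd smul y m c) S v = (\<lambda>_. 0) S v"
    by (simp add: kd_apply kds_kds)
qed

lemma boundaries_sub_cycles:
  assumes y: "\<And>i. i < m \<Longrightarrow> y i \<in> coord_ring n Y"
  shows "koszul_boundaries (coord_ring n Y) smul y m p \<subseteq> koszul_cycles (coord_ring n Y) smul y m p"
  unfolding koszul_boundaries_def koszul_cycles_def
  using kd_in_kchains[of m y n Y, OF y] kd_kd by blast

lemma exact_of_unit: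
  assumes y: "\<And>i. i < m \<Longrightarrow> y i \<in> coord_ring n Y"
    and G: "\<And>i. i < m \<Longrightarrow> G i \<in> coord_ring n Y"
    and unit: "\<And>v. v \<in> Y \<Longrightarrow> (\<Sum>i<m. G i v * y i v) = 1"
  shows "koszul_cycles (coord_ring n Y) smul y m p = koszul_boundaries (coord_ring n Y) smul y m p"
proof
  show "koszul_boundaries (coord_ring n Y) smul y m p \<subseteq> koszul_cycles (coord_ring n Y) smul y m p"
    by (rule boundaries_sub_cycles[OF y])
  show "koszul_cycles (coord_ring n Y) smul y m p \<subseteq> koszul_boundaries (coord_ring n Y) smul y m p"
  proof
    fix c assume "c \<in> koszul_cycles (coord_ring n Y) smul y m p"
    then have c: "c \<in> kchains (coord_ring n Y) m p" and kc: "kd smul y m c = (\<lambda>_. 0)"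
      by (auto simp: koszul_cycles_def)
    have cS: "c S \<in> coord_ring n Y" for S using c by (simp add: kchains_def)
    have c0: "c S = 0" if "\<not> (S \<subseteq> {..<m} \<and> card S = p)" for S using c that by (simp add: kchains_def)
    define b where "b S = (\<lambda>v. hs (\<lambda>i. G i v) m (\<lambda>T. c T v) S)" for S
    have bS: "b S = (if S \<subseteq> {..<m} then (\<Sum>i\<in>S. (\<lambda>v. sg i (S - {i}) * (G i v * c (S - {i}) v))) else 0)" for S
      by (rule ext) (simp add: b_def hs_def sum_fun_apply mult_ac)
    have bval: "b S \<in> coord_ring n Y" for S
    proof (cases "S \<subseteq> {..<m}")
      case True
      then have "\<And>i. i \<in> S \<Longrightarrow> G i \<in> coord_ring n Y" using G by auto
      then show ?thesis using True unfolding bS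
        by (auto intro!: coord_ring_sum coord_ring_scale coord_ring_mult cS)
    next
      case False then show ?thesis by (simp add: bS coord_ring_0)
    qed
    have bsupp: "b S = 0" if "\<not> (S \<subseteq> {..<m} \<and> card S = Suc p)" for S
    proof (cases "S \<subseteq> {..<m}")
      case True
      then have fS: "finite S" using finite_subset by blast
      have "c (S - {i}) = 0" if "i \<in> S" for i
      proof (rule c0)
        have "card (S - {i}) = card S - 1" using fS that by simp
        moreover have "card S \<noteq> Suc p" using True \<open>\<not> (S \<subseteq> {..<m} \<and> card S = Suc p)\<close> by auto
        moreover have "card S > 0" using fS that card_gt_0_iff by blast
        ultimately show "\<not> (S - {i} \<subseteq> {..<m} \<and> card (S - {i}) = p)" by auto
      qed
      then have "(\<Sum>i\<in>S. (\<lambda>v. sg i (S - {i}) * (G i v * c (S - {i}) v))) = 0"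
        by (intro sum.neutral ballI) (simp add: zero_fun_def)
      then show ?thesis using True unfolding bS by simp
    next
      case False then show ?thesis by (simp add: bS)
    qed
    have bch: "b \<in> kchains (coord_ring n Y) m (Suc p)"
      using bval bsupp by (simp add: kchains_def)
    have "kd smul y m b = c"
    proof (intro ext)
      fix S v
      have bv: "(\<lambda>T. b T v) = hs (\<lambda>i. G i v) m (\<lambda>T. c T v)" by (rule ext) (simp add: b_def)
      have kv: "kds (\<lambda>i. y i v) m (\<lambda>T. c T v) = (\<lambda>_. 0)"
      proof (rule ext)
        fix T show "kds (\<lambda>i. y i v) m (\<lambda>T. c T v) T = 0"
          using fun_cong[OF fun_cong[OF kc, of T], of v] by (simp add: kd_apply)
      qed
      show "kd smul y m b S v = c S v"
      proof (cases "S \<subseteq> {..<m}")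
        case True
        have "kd smul y m b S v = kds (\<lambda>i. y i v) m (hs (\<lambda>i. G i v) m (\<lambda>T. c T v)) S"
          by (simp add: kd_apply bv)
        also have "\<dots> = (\<Sum>i<m. G i v * y i v) * c S v"
          using kds_hs[OF True, of "\<lambda>i. y i v" "\<lambda>i. G i v" "\<lambda>T. c T v"] True
          by (simp add: kv hs_def)
        also have "\<dots> = c S v"
        proof (cases "v \<in> Y")
          case True then show ?thesis by (simp add: unit)
        next
          case False then show ?thesis using coord_ring_zero_out[OF cS] by simp
        qed
        finally show ?thesis .
      next
        case False
        then show ?thesis using c0[of S] by (simp add: kd_apply kds_def)
      qed
    qed
    then show "c \<in> koszul_boundaries (coord_ring n Y) smul y m p"
      unfolding koszul_boundaries_def using bch by blast
  qed
qed



lemma monic_poly_split: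
  assumes ac: "alg_closed TYPE('k::field)"
  shows "lead_coeff (p :: 'k poly) = 1 \<Longrightarrow> \<exists>bs. \<forall>x. poly p x = (\<Prod>b\<leftarrow>bs. (x - b))"
proof (induction "degree p" arbitrary: p rule: less_induct)
  case less
  show ?case
  proof (cases "degree p = 0")
    case True
    then have "p = [:1:]" using less.prems by (metis degree_0_id)
    then show ?thesis by (intro exI[of _ "[]"]) simp
  next
    case False
    then obtain z where z: "poly p z = 0" using ac unfolding alg_closed_def by blast
    then obtain r where r: "p = [:-z, 1:] * r" using poly_eq_0_iff_dvd by (metis dvdE)
    have p0: "p \<noteq> 0" using less.prems by auto
    then have r0: "r \<noteq> 0" using r by auto
    have "lead_coeff p = lead_coeff [:-z, 1:] * lead_coeff r" unfolding r by (rule lead_coeff_mult)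
    then have "lead_coeff r = 1" using less.prems by simp
    moreover have "degree r < degree p"
    proof -
      have "degree p = degree [:-z, 1:] + degree r" unfolding r by (rule degree_mult_eq) (use r0 in auto)
      then show ?thesis by simp
    qed
    ultimately obtain bs where bs: "\<forall>x. poly r x = (\<Prod>b\<leftarrow>bs. (x - b))" using less.hyps by blast
    show ?thesis
      by (intro exI[of _ "z # bs"]) (simp add: r bs algebra_simps)
  qed
qed

lemma monic_split:
  assumes ac: "alg_closed TYPE('k::field)"
  shows "\<exists>bs. \<forall>x::'k. x ^ d + (\<Sum>j<d. e j * x ^ j) = (\<Prod>b\<leftarrow>bs. (x - b))"
proof -
  define p :: "'k poly" where "p = monom 1 d + (\<Sum>j<d. monom (e j) j)"
  have cp: "coeff p i = (if i = d then 1 else 0) + (if i < d then e i else 0)" for i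
    by (auto simp: p_def coeff_sum)
  have "degree p \<le> d" by (rule degree_le) (simp add: cp)
  moreover have "d \<le> degree p" by (rule le_degree) (simp add: cp)
  ultimately have "degree p = d" by simp
  then have "lead_coeff p = 1" by (simp add: cp)
  then obtain bs where bs: "\<forall>x. poly p x = (\<Prod>b\<leftarrow>bs. (x - b))" using monic_poly_split[OF ac] by blast
  have "poly p x = x ^ d + (\<Sum>j<d. e j * x ^ j)" for x by (simp add: p_def poly_sum poly_monom)
  then show ?thesis using bs by metis
qed



inductive_set ideal_on :: "nat \<Rightarrow> (nat \<Rightarrow> 'k) set \<Rightarrow> ((nat \<Rightarrow> 'k) \<Rightarrow> 'k) set
    \<Rightarrow> ((nat \<Rightarrow> 'k::comm_ring_1) \<Rightarrow> 'k) set" for n Y G where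
  gen: "g \<in> G \<Longrightarrow> g \<in> ideal_on n Y G"
| zero: "(\<lambda>v. 0) \<in> ideal_on n Y G"
| add: "f \<in> ideal_on n Y G \<Longrightarrow> g \<in> ideal_on n Y G \<Longrightarrow> (\<lambda>v. f v + g v) \<in> ideal_on n Y G"
| mult: "p \<in> polyfun n \<Longrightarrow> f \<in> ideal_on n Y G \<Longrightarrow> (\<lambda>v. p v * f v) \<in> ideal_on n Y G"
| eq: "f \<in> ideal_on n Y G \<Longrightarrow> (\<forall>v\<in>Y. h v = f v) \<Longrightarrow> h \<in> ideal_on n Y G"

lemma ideal_mono: "f \<in> ideal_on n Y G \<Longrightarrow> G \<subseteq> G' \<Longrightarrow> f \<in> ideal_on n Y G'"
  by (induction rule: ideal_on.induct) (auto intro: ideal_on.intros)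

lemma ideal_absorb: "f \<in> ideal_on n Y (insert h G) \<Longrightarrow> h \<in> ideal_on n Y G \<Longrightarrow> f \<in> ideal_on n Y G"
  by (induction rule: ideal_on.induct) (auto intro: ideal_on.intros)

lemma ideal_const_mult: "f \<in> ideal_on n Y G \<Longrightarrow> (\<lambda>v. c * f v) \<in> ideal_on n Y G"
  using ideal_on.mult[OF polyfun.const] by blast

lemma ideal_neg: "f \<in> ideal_on n Y G \<Longrightarrow> (\<lambda>v. - f v) \<in> ideal_on n Y G"
  using ideal_const_mult[of f n Y G "-1"] by simp

lemma ideal_diff: "f \<in> ideal_on n Y G \<Longrightarrow> g \<in> ideal_on n Y G \<Longrightarrow> (\<lambda>v. f v - g v) \<in> ideal_on n Y G"
  using ideal_on.add[OF _ ideal_neg] by (simp only: diff_conv_add_uminus) blast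

lemma ideal_sum: "(\<And>i. i \<in> A \<Longrightarrow> f i \<in> ideal_on n Y G) \<Longrightarrow> (\<lambda>v. \<Sum>i\<in>A. f i v) \<in> ideal_on n Y G"
  by (induction A rule: infinite_finite_induct) (auto intro: ideal_on.intros)

lemma ideal_decomp:
  "f \<in> ideal_on n Y (insert u G) \<Longrightarrow>
    \<exists>s\<in>polyfun n. \<exists>A\<in>ideal_on n Y G. \<forall>v\<in>Y. f v = A v + s v * u v"
proof (induction rule: ideal_on.induct)
  case (gen g)
  then show ?case
  proof
    assume "g = u"
    then show ?thesis by (intro bexI[of _ "\<lambda>v. 1"] bexI[of _ "\<lambda>v. 0"]) (auto intro: ideal_on.intros polyfun.intros)
  next
    assume "g \<in> G"
    then show ?thesis by (intro bexI[of _ "\<lambda>v. 0"] bexI[of _ g]) (auto intro: ideal_on.intros polyfun.intros)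
  qed
next
  case zero
  then show ?case by (intro bexI[of _ "\<lambda>v. 0"] bexI[of _ "\<lambda>v. 0"]) (auto intro: ideal_on.intros polyfun.intros)
next
  case (add f g)
  then obtain s1 A1 s2 A2 where "s1 \<in> polyfun n" "A1 \<in> ideal_on n Y G" "\<forall>v\<in>Y. f v = A1 v + s1 v * u v"
    "s2 \<in> polyfun n" "A2 \<in> ideal_on n Y G" "\<forall>v\<in>Y. g v = A2 v + s2 v * u v" by blast
  then show ?case
    by (intro bexI[of _ "\<lambda>v. s1 v + s2 v"] bexI[of _ "\<lambda>v. A1 v + A2 v"])
       (auto intro: ideal_on.intros polyfun.intros simp: algebra_simps)
next
  case (mult p f)
  then obtain s1 A1 where "s1 \<in> polyfun n" "A1 \<in> ideal_on n Y G" "\<forall>v\<in>Y. f v = A1 v + s1 v * u v" by blast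
  then show ?case using mult.hyps(1)
    by (intro bexI[of _ "\<lambda>v. p v * s1 v"] bexI[of _ "\<lambda>v. p v * A1 v"])
       (auto intro: ideal_on.intros polyfun.intros simp: algebra_simps)
next
  case (eq f h)
  then show ?case by auto
qed

lemma ideal_one_prod:
  assumes u: "u \<in> polyfun n" and w: "w \<in> polyfun n"
    and 1: "(\<lambda>v. 1) \<in> ideal_on n Y (insert u G)" and 2: "(\<lambda>v. 1) \<in> ideal_on n Y (insert w G)"
  shows "(\<lambda>v. 1) \<in> ideal_on n Y (insert (\<lambda>v. u v * w v) G)"
proof -
  obtain s A where s: "s \<in> polyfun n" "A \<in> ideal_on n Y G" "\<forall>v\<in>Y. 1 = A v + s v * u v"
    using ideal_decomp[OF 1] by metis
  obtain t B where t: "t \<in> polyfun n" "B \<in> ideal_on n Y G" "\<forall>v\<in>Y. 1 = B v + t v * w v"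
    using ideal_decomp[OF 2] by metis
  let ?I = "ideal_on n Y (insert (\<lambda>v. u v * w v) G)"
  have A: "A \<in> ?I" by (rule ideal_mono[OF s(2)]) auto
  have B: "B \<in> ?I" by (rule ideal_mono[OF t(2)]) auto
  have 1: "(\<lambda>v. (s v * u v) * B v) \<in> ?I" by (rule ideal_on.mult[OF polyfun.mult[OF s(1) u] B])
  have 2: "(\<lambda>v. (s v * t v) * (u v * w v)) \<in> ?I"
    by (rule ideal_on.mult[OF polyfun.mult[OF s(1) t(1)]]) (auto intro: ideal_on.gen)
  have "(\<lambda>v. A v + ((s v * u v) * B v + (s v * t v) * (u v * w v))) \<in> ?I"
    by (intro ideal_on.add A 1 2)
  moreover have "\<forall>v\<in>Y. 1 = A v + ((s v * u v) * B v + (s v * t v) * (u v * w v))"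
  proof
    fix v assume v: "v \<in> Y"
    have "A v + ((s v * u v) * B v + (s v * t v) * (u v * w v)) = A v + s v * u v * (B v + t v * w v)"
      by (simp add: algebra_simps)
    also have "\<dots> = 1" using s(3) t(3) v by simp
    finally show "1 = A v + ((s v * u v) * B v + (s v * t v) * (u v * w v))" by simp
  qed
  ultimately show ?thesis by (rule ideal_on.eq)
qed

lemma ideal_one_prod_list:
  assumes i: "i < n"
    and all: "\<And>b. b \<in> set bs \<Longrightarrow> (\<lambda>v. 1) \<in> ideal_on n Y (insert (\<lambda>v. v i - b) G)"
  shows "(\<lambda>v. 1) \<in> ideal_on n Y (insert (\<lambda>v. \<Prod>b\<leftarrow>bs. (v i - b)) G)"
  using all
proof (induction bs)
  case Nil then show ?case by (simp add: ideal_on.gen)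
next
  case (Cons b bs)
  have u: "(\<lambda>v. v i - b) \<in> polyfun n" by (intro polyfun_diff polyfun.intros i)
  have w: "(\<lambda>v. \<Prod>b\<leftarrow>bs. (v i - b)) \<in> polyfun n"
    by (intro polyfun_prod_list polyfun_diff polyfun.intros i)
  show ?case using ideal_one_prod[OF u w Cons.prems[of b] Cons.IH] Cons.prems by simp
qed

lemma ideal_subst:
  assumes g: "g \<in> polyfun m"
    and gens: "\<And>i. i < m \<Longrightarrow> (\<lambda>v. \<phi> v i - c i) \<in> ideal_on n Y H"
    and pf: "\<And>i. i < m \<Longrightarrow> (\<lambda>v. \<phi> v i) \<in> polyfun n"
  shows "(\<lambda>v. g (\<phi> v) - g c) \<in> ideal_on n Y H"
  using g
proof induction
  case (const c)
  then show ?case using ideal_on.zero by simp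
next
  case (var i)
  then show ?case using gens by simp
next
  case (add f g)
  have "(\<lambda>v. (f (\<phi> v) - f c) + (g (\<phi> v) - g c)) \<in> ideal_on n Y H" by (rule ideal_on.add[OF add.IH])
  then show ?case by (simp add: algebra_simps)
next
  case (mult f g)
  have "(\<lambda>v. f (\<phi> v) * (g (\<phi> v) - g c) + g c * (f (\<phi> v) - f c)) \<in> ideal_on n Y H"
    by (rule ideal_on.add[OF ideal_on.mult[OF polyfun_compose[OF mult.hyps(1) pf] mult.IH(2)]
          ideal_const_mult[OF mult.IH(1)]])
  then show ?case by (simp add: algebra_simps)
qed

lemma ideal_const_one:
  fixes cc :: "'k::field"
  assumes "(\<lambda>v. cc) \<in> ideal_on n Y H" "cc \<noteq> 0"
  shows "(\<lambda>v. 1) \<in> ideal_on n Y H"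
  using ideal_const_mult[OF assms(1), of "inverse cc"] assms(2) by simp

lemma ideal_extract:
  fixes m :: nat
  assumes "f \<in> ideal_on n Y (gg ` {..<m})"
  shows "\<exists>c. (\<forall>j<m. c j \<in> polyfun n) \<and> (\<forall>v\<in>Y. f v = (\<Sum>j<m. c j v * gg j v))"
  using assms
proof induction
  case (gen g)
  then obtain j0 where j0: "j0 < m" "g = gg j0" by auto
  show ?case
  proof (intro exI[of _ "\<lambda>j v. if j = j0 then 1 else 0"] conjI allI impI ballI)
    fix j assume "j < m" show "(\<lambda>v. if j = j0 then 1 else 0) \<in> polyfun n"
      by (cases "j = j0") (auto intro: polyfun.const)
  next
    fix v show "g v = (\<Sum>j<m. (if j = j0 then 1 else 0) * gg j v)"
    proof -
      have "(\<Sum>j<m. (if j = j0 then 1 else 0) * gg j v) = (\<Sum>j<m. if j = j0 then gg j v else 0)"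
        by (intro sum.cong) auto
      also have "\<dots> = gg j0 v" using j0 by (subst sum.delta[OF finite_lessThan]) simp
      finally show ?thesis using j0 by simp
    qed
  qed
next
  case zero
  show ?case by (intro exI[of _ "\<lambda>j v. 0"]) (auto intro: polyfun.const)
next
  case (add f g)
  then obtain c1 c2 where "\<forall>j<m. c1 j \<in> polyfun n" "\<forall>v\<in>Y. f v = (\<Sum>j<m. c1 j v * gg j v)"
    "\<forall>j<m. c2 j \<in> polyfun n" "\<forall>v\<in>Y. g v = (\<Sum>j<m. c2 j v * gg j v)" by blast
  then show ?case
    by (intro exI[of _ "\<lambda>j v. c1 j v + c2 j v"]) (auto intro: polyfun.add simp: algebra_simps sum.distrib)
next
  case (mult p f)
  then obtain c1 where "\<forall>j<m. c1 j \<in> polyfun n" "\<forall>v\<in>Y. f v = (\<Sum>j<m. c1 j v * gg j v)" by blast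
  then show ?case using mult.hyps(1)
    by (intro exI[of _ "\<lambda>j v. p v * c1 j v"]) (auto intro: polyfun.mult simp: sum_distrib_left mult_ac)
next
  case (eq f h)
  then show ?case by auto
qed



lemma ideal_vanish: "f \<in> ideal_on n Y G \<Longrightarrow> v \<in> Y \<Longrightarrow> (\<forall>g\<in>G. g v = 0) \<Longrightarrow> f v = 0"
  by (induction rule: ideal_on.induct) auto

lemma polymap_gens:
  assumes "i < m"
  shows "(\<lambda>v. polymap m q v i - a i) \<in> ideal_on n Y ((\<lambda>j v. q j v - a j) ` {..<m})"
proof -
  have "(\<lambda>v. polymap m q v i - a i) = (\<lambda>v. q i v - a i)" using assms by (simp add: polymap_def)
  then show ?thesis using assms by (auto intro: ideal_on.gen)
qed

lemma polymap_pf: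
  assumes "\<forall>j<m. q j \<in> polyfun n" "i < m"
  shows "(\<lambda>v. polymap m q v i) \<in> polyfun n"
proof -
  have "(\<lambda>v. polymap m q v i) = q i" using assms by (simp add: polymap_def)
  then show ?thesis using assms by simp
qed

lemma coord_in_ideal:
  fixes Y :: "(nat \<Rightarrow> 'k::field) set" and q :: "nat \<Rightarrow> (nat \<Rightarrow> 'k) \<Rightarrow> 'k" and m :: nat
  assumes ac: "alg_closed TYPE('k)"
    and q: "\<forall>j<m. q j \<in> polyfun n"
    and int: "integral_over Y (coord_ring n Y) (gen_subalg n Y m q)"
    and k: "k < n"
  shows "\<exists>bs. (\<lambda>v. \<Prod>b\<leftarrow>bs. (v k - b)) \<in> ideal_on n Y ((\<lambda>j v. q j v - a j) ` {..<m})"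
proof -
  let ?G0 = "(\<lambda>j v. q j v - a j) ` {..<m}"
  have x: "restr Y (\<lambda>v. v k) \<in> coord_ring n Y" by (rule restr_in) (rule polyfun.var[OF k])
  obtain d c where c: "\<forall>j<d. c j \<in> gen_subalg n Y m q"
    and eq: "\<forall>v\<in>Y. restr Y (\<lambda>v. v k) v ^ d + (\<Sum>j<d. c j v * restr Y (\<lambda>v. v k) v ^ j) = 0"
    using int x unfolding integral_over_def by blast
  have "\<forall>j<d. \<exists>g. c j = restr Y (\<lambda>v. g (polymap m q v)) \<and> g \<in> polyfun m"
    using c unfolding gen_subalg_def by blast
  then obtain gg where gg: "\<And>j. j < d \<Longrightarrow> c j = restr Y (\<lambda>v. gg j (polymap m q v)) \<and> gg j \<in> polyfun m"
    by metis
  obtain bs where bs: "\<forall>x::'k. x ^ d + (\<Sum>j<d. gg j a * x ^ j) = (\<Prod>b\<leftarrow>bs. (x - b))"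
    using monic_split[OF ac, of d "\<lambda>j. gg j a"] by blast
  define R where "R = (\<lambda>v. - (\<Sum>j<d. v k ^ j * (gg j (polymap m q v) - gg j a)))"
  have R: "R \<in> ideal_on n Y ?G0"
    unfolding R_def
  proof (intro ideal_neg ideal_sum ideal_on.mult)
    fix j assume j: "j \<in> {..<d}"
    show "(\<lambda>v. v k ^ j) \<in> polyfun n" by (rule polyfun_power[OF polyfun.var[OF k]])
    show "(\<lambda>v. gg j (polymap m q v) - gg j a) \<in> ideal_on n Y ?G0"
      by (rule ideal_subst[OF conjunct2[OF gg]]) (use j polymap_gens polymap_pf[OF q] in auto)
  qed
  have "\<forall>v\<in>Y. (\<Prod>b\<leftarrow>bs. (v k - b)) = R v"
  proof
    fix v assume v: "v \<in> Y"
    have 0: "v k ^ d + (\<Sum>j<d. gg j (polymap m q v) * v k ^ j) = 0"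
      using eq v gg by (simp add: restr_def)
    have "(\<Prod>b\<leftarrow>bs. (v k - b)) = v k ^ d + (\<Sum>j<d. gg j a * v k ^ j)" using bs by simp
    also have "\<dots> = (v k ^ d + (\<Sum>j<d. gg j a * v k ^ j)) - (v k ^ d + (\<Sum>j<d. gg j (polymap m q v) * v k ^ j))"
      using 0 by simp
    also have "\<dots> = R v"
      by (simp add: R_def algebra_simps sum_subtractf[symmetric] sum_negf[symmetric])
    finally show "(\<Prod>b\<leftarrow>bs. (v k - b)) = R v" .
  qed
  then have "(\<lambda>v. \<Prod>b\<leftarrow>bs. (v k - b)) \<in> ideal_on n Y ?G0" by (rule ideal_on.eq[OF R])
  then show ?thesis by blast
qed



lemma nullstellensatz_q:
  fixes Y :: "(nat \<Rightarrow> 'k::field) set" and q :: "nat \<Rightarrow> (nat \<Rightarrow> 'k) \<Rightarrow> 'k" and m :: nat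
  assumes ac: "alg_closed TYPE('k)"
    and F: "F \<subseteq> polyfun n" "Y = zero_set n F"
    and q: "\<forall>j<m. q j \<in> polyfun n"
    and int: "integral_over Y (coord_ring n Y) (gen_subalg n Y m q)"
    and a: "a \<in> kspace m" "a \<notin> polymap m q ` Y"
  shows "(\<lambda>v. 1) \<in> ideal_on n Y ((\<lambda>j v. q j v - a j) ` {..<m})"
proof (rule ccontr)
  let ?G0 = "(\<lambda>j v. q j v - a j) ` {..<m}"
  assume H: "(\<lambda>v. 1) \<notin> ideal_on n Y ?G0"
  define GG where "GG b k = ?G0 \<union> (\<lambda>i v. v i - b i) ` {..<k}" for b :: "nat \<Rightarrow> 'k" and k
  have step: "\<exists>b'. (\<lambda>v. 1) \<notin> ideal_on n Y (GG b' (Suc k))"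
    if k: "k < n" and nb: "(\<lambda>v. 1) \<notin> ideal_on n Y (GG b k)" for b k
  proof -
    obtain bs where bs: "(\<lambda>v. \<Prod>b\<leftarrow>bs. (v k - b)) \<in> ideal_on n Y ?G0"
      using coord_in_ideal[OF ac q int k] by blast
    have P: "(\<lambda>v. \<Prod>b\<leftarrow>bs. (v k - b)) \<in> ideal_on n Y (GG b k)"
      by (rule ideal_mono[OF bs]) (auto simp: GG_def)
    have "\<exists>c\<in>set bs. (\<lambda>v. 1) \<notin> ideal_on n Y (insert (\<lambda>v. v k - c) (GG b k))"
    proof (rule ccontr)
      assume "\<not> ?thesis"
      then have "(\<lambda>v. 1) \<in> ideal_on n Y (insert (\<lambda>v. \<Prod>b\<leftarrow>bs. (v k - b)) (GG b k))"
        using ideal_one_prod_list[OF k, of bs] by blast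
      then have "(\<lambda>v. 1) \<in> ideal_on n Y (GG b k)" by (rule ideal_absorb[OF _ P])
      then show False using nb by simp
    qed
    then obtain c where c: "(\<lambda>v. 1) \<notin> ideal_on n Y (insert (\<lambda>v. v k - c) (GG b k))" by blast
    have "GG (b(k := c)) (Suc k) = insert (\<lambda>v. v k - c) (GG b k)"
    proof -
      have "(\<lambda>i v. v i - (b(k := c)) i) ` {..<Suc k} = insert (\<lambda>v. v k - c) ((\<lambda>i v. v i - b i) ` {..<k})"
        by (auto simp: lessThan_Suc image_iff)
      then show ?thesis by (auto simp: GG_def)
    qed
    then show ?thesis using c by metis
  qed
  have all: "k \<le> n \<Longrightarrow> \<exists>b. (\<lambda>v. 1) \<notin> ideal_on n Y (GG b k)" for k
  proof (induction k)
    case 0 then show ?case using H by (simp add: GG_def)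
  next
    case (Suc k) then show ?case using step by auto
  qed
  obtain b where b: "(\<lambda>v. 1) \<notin> ideal_on n Y (GG b n)" using all by blast
  define b' where "b' = (\<lambda>i. if i < n then b i else 0)"
  have GGb': "GG b n = GG b' n"
  proof -
    have "(\<lambda>i v. v i - b i) ` {..<n} = (\<lambda>i v. v i - b' i) ` {..<n}"
      by (rule image_cong) (auto simp: b'_def)
    then show ?thesis by (simp add: GG_def)
  qed
  let ?H = "GG b' n"
  have nH: "(\<lambda>v. 1) \<notin> ideal_on n Y ?H" using b GGb' by simp
  have b'k: "b' \<in> kspace n" by (simp add: kspace_def b'_def)
  have sub: "(\<lambda>v. g v - g b') \<in> ideal_on n Y ?H" if g: "g \<in> polyfun n" for g
  proof (rule ideal_subst[OF g, where \<phi> = "\<lambda>v. v"])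
    fix i assume "i < n"
    then show "(\<lambda>v. v i - b' i) \<in> ideal_on n Y ?H" by (auto intro: ideal_on.gen simp: GG_def)
    show "(\<lambda>v. v i) \<in> polyfun n" by (rule polyfun.var) fact
  qed
  have const0: "cc = 0" if "(\<lambda>v. cc) \<in> ideal_on n Y ?H" for cc
    using ideal_const_one[OF that] nH by blast
  have "b' \<in> Y"
  proof -
    have "f b' = 0" if f: "f \<in> F" for f
    proof -
      have fY: "\<forall>v\<in>Y. f v = 0" using F(2) f by (simp add: zero_set_def)
      have "(\<lambda>v. f v - f b') \<in> ideal_on n Y ?H" using sub F(1) f by blast
      then have "(\<lambda>v. - f b') \<in> ideal_on n Y ?H" by (rule ideal_on.eq) (simp add: fY)
      then show ?thesis using const0 by fastforce
    qed
    then show ?thesis using b'k F(2) by (simp add: zero_set_def)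
  qed
  moreover have "polymap m q b' = a"
  proof (rule ext)
    fix j show "polymap m q b' j = a j"
    proof (cases "j < m")
      case True
      have 1: "(\<lambda>v. q j v - q j b') \<in> ideal_on n Y ?H" using sub q True by blast
      have 2: "(\<lambda>v. q j v - a j) \<in> ideal_on n Y ?H" using True by (auto intro: ideal_on.gen simp: GG_def)
      have "(\<lambda>v. (q j v - q j b') - (q j v - a j)) \<in> ideal_on n Y ?H" by (rule ideal_diff[OF 1 2])
      then have "(\<lambda>v. a j - q j b') \<in> ideal_on n Y ?H" by simp
      then have "a j - q j b' = 0" by (rule const0)
      then show ?thesis using True by (simp add: polymap_def)
    next
      case False then show ?thesis using a(1) by (simp add: polymap_def kspace_def)
    qed
  qed
  ultimately show False using a(2) by blast
qed



lemma kchains_top: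
  "kchains (coord_ring n Y) m (Suc m) = {\<lambda>_. (0 :: (nat \<Rightarrow> 'k::comm_ring_1) \<Rightarrow> 'k)}"
proof -
  have z: "c S = 0" if "c \<in> kchains (coord_ring n Y) m (Suc m)" for c :: "nat set \<Rightarrow> (nat \<Rightarrow> 'k) \<Rightarrow> 'k" and S
  proof -
    have "\<not> (S \<subseteq> {..<m} \<and> card S = Suc m)"
    proof
      assume a: "S \<subseteq> {..<m} \<and> card S = Suc m"
      then have "card S \<le> card {..<m}" by (intro card_mono) auto
      then show False using a by simp
    qed
    then show ?thesis using that unfolding kchains_def by blast
  qed
  have "(\<lambda>_. 0) \<in> kchains (coord_ring n Y) m (Suc m)"
    unfolding kchains_def using coord_ring_0 by blast
  moreover have "c = (\<lambda>_. 0)" if "c \<in> kchains (coord_ring n Y) m (Suc m)" for c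
    using z[OF that] by blast
  ultimately show ?thesis by blast
qed

lemma kd_zero: "kd smul y m (\<lambda>_. (0 :: 'v \<Rightarrow> 'k::comm_ring_1)) = (\<lambda>_. 0)"
proof (rule ext)+
  fix S v
  show "kd smul y m (\<lambda>_. (0 :: 'v \<Rightarrow> 'k::comm_ring_1)) S v = (\<lambda>_. 0) S v"
  proof -
    have "kd smul y m (\<lambda>_. (0 :: 'v \<Rightarrow> 'k)) S v = kds (\<lambda>i. y i v) m (\<lambda>T. (\<lambda>_. (0 :: 'v \<Rightarrow> 'k)) T v) S"
      by (rule kd_apply)
    also have "\<dots> = 0" by (simp add: kds_def)
    finally show ?thesis by simp
  qed
qed

lemma top_nonzero_iff:
  fixes y :: "nat \<Rightarrow> (nat \<Rightarrow> 'k::comm_ring_1) \<Rightarrow> 'k"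
  assumes y: "\<And>i. i < m \<Longrightarrow> y i \<in> coord_ring n Y"
  shows "koszul_homology_nonzero (coord_ring n Y) smul y m m \<longleftrightarrow>
    (\<exists>u\<in>coord_ring n Y. u \<noteq> 0 \<and> (\<forall>i<m. \<forall>v. y i v * u v = 0))"
proof -
  let ?M = "coord_ring n Y"
  have B: "koszul_boundaries ?M smul y m m = {\<lambda>_. 0}"
    by (simp only: koszul_boundaries_def kchains_top kd_zero image_insert image_empty)
  have Z: "(\<lambda>_. 0) \<in> koszul_cycles ?M smul y m m"
    using kchains_top[of n Y m] boundaries_sub_cycles[of m y n Y m] y B by blast
  have N: "finite {..<m}" "card {..<m} = m" by auto
  show ?thesis
  proof
    assume "koszul_homology_nonzero ?M smul y m m"
    then have ne: "koszul_cycles ?M smul y m m \<noteq> {\<lambda>_. 0}" using B unfolding koszul_homology_nonzero_def by simp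
    have "\<exists>c\<in>koszul_cycles ?M smul y m m. c \<noteq> (\<lambda>_. 0)"
    proof (rule ccontr)
      assume "\<not> ?thesis"
      then have "koszul_cycles ?M smul y m m \<subseteq> {\<lambda>_. 0}" by blast
      then show False using Z ne by blast
    qed
    then obtain c where c: "c \<in> koszul_cycles ?M smul y m m" "c \<noteq> (\<lambda>_. 0)" by blast
    then have cch: "c \<in> kchains ?M m m" and kc: "kd smul y m c = (\<lambda>_. 0)"
      by (auto simp: koszul_cycles_def)
    obtain S where S: "c S \<noteq> 0" using c(2) by auto
    then have "S \<subseteq> {..<m} \<and> card S = m" using cch by (auto simp: kchains_def)
    then have SN: "S = {..<m}" using card_subset_eq[OF N(1)] N(2) by metis
    have "y i v * c {..<m} v = 0" if i: "i < m" for i v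
    proof -
      have e1: "{..<m} - ({..<m} - {i}) = {i}" using i by auto
      have e2: "insert i ({..<m} - {i}) = {..<m}" using i by auto
      have "kd smul y m c ({..<m} - {i}) v = 0" using kc by simp
      then have "sg i ({..<m} - {i}) * (y i v * c {..<m} v) = 0"
        using i by (simp add: kd_apply kds_def e1 e2 mult.assoc insert_absorb)
      then have "sg i ({..<m} - {i}) * (sg i ({..<m} - {i}) * (y i v * c {..<m} v)) = 0" by simp
      then show ?thesis by (simp add: mult.assoc[symmetric] sg_sq)
    qed
    moreover have "c {..<m} \<in> ?M" using cch by (simp add: kchains_def)
    ultimately show "\<exists>u\<in>?M. u \<noteq> 0 \<and> (\<forall>i<m. \<forall>v. y i v * u v = 0)" using S SN by blast
  next
    assume "\<exists>u\<in>?M. u \<noteq> 0 \<and> (\<forall>i<m. \<forall>v. y i v * u v = 0)"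
    then obtain u where u: "u \<in> ?M" "u \<noteq> 0" "\<And>i v. i < m \<Longrightarrow> y i v * u v = 0" by blast
    define c where "c S = (if S = {..<m} then u else 0)" for S
    have cch: "c \<in> kchains ?M m m" using u(1) coord_ring_0 by (auto simp: kchains_def c_def)
    have "kd smul y m c = (\<lambda>_. 0)"
    proof (intro ext)
      fix S v
      have "kds (\<lambda>i. y i v) m (\<lambda>T. c T v) S = 0"
        unfolding kds_def by (auto simp: c_def u(3) mult.assoc intro!: sum.neutral)
      then show "kd smul y m c S v = (\<lambda>_. 0) S v" by (simp add: kd_apply)
    qed
    then have "c \<in> koszul_cycles ?M smul y m m" using cch by (simp add: koszul_cycles_def)
    moreover have "c \<noteq> (\<lambda>_. 0)" using u(2) by (metis c_def)
    ultimately show "koszul_homology_nonzero ?M smul y m m"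
      unfolding koszul_homology_nonzero_def using B by blast
  qed
qed

lemma ydiff_apply: "(restr Y (q i) - restr Y (\<lambda>v. c)) v = (if v \<in> Y then q i v - c else (0::'k::comm_ring_1))"
  by (simp add: fun_diff_def restr_def)

lemma ydiff_in:
  assumes "q i \<in> polyfun n"
  shows "restr Y (q i) - restr Y (\<lambda>v. c) \<in> coord_ring n Y"
proof -
  have "restr Y (q i) - restr Y (\<lambda>v. c) = restr Y (\<lambda>v. q i v - c)" by (auto simp: fun_diff_def restr_def)
  then show ?thesis using restr_in[OF polyfun_diff[OF assms polyfun.const]] by simp
qed

lemma coord_ring_nonzero: "u \<in> coord_ring n Y \<Longrightarrow> u \<noteq> 0 \<longleftrightarrow> (\<exists>v\<in>Y. u v \<noteq> 0)"
  using coord_ring_zero_out by (fastforce)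

lemma pspec_char:
  fixes Y :: "(nat \<Rightarrow> 'k::comm_ring_1) set"
  assumes q: "\<forall>j<m. q j \<in> polyfun n"
  shows "a \<in> point_spectrum (coord_ring n Y) smul (\<lambda>c. restr Y (\<lambda>v. c)) (\<lambda>j. restr Y (q j)) m \<longleftrightarrow>
    a \<in> kspace m \<and> (\<exists>u\<in>coord_ring n Y. (\<exists>v\<in>Y. u v \<noteq> 0) \<and> (\<forall>j<m. \<forall>v\<in>Y. (q j v - a j) * u v = 0))"
proof -
  have y: "\<And>i. i < m \<Longrightarrow> restr Y (q i) - restr Y (\<lambda>v. a i) \<in> coord_ring n Y"
    using q by (auto intro: ydiff_in)
  have E: "(\<forall>i<m. \<forall>v. (restr Y (q i) - restr Y (\<lambda>v. a i)) v * u v = 0) \<longleftrightarrow>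
        (\<forall>j<m. \<forall>v\<in>Y. (q j v - a j) * u v = 0)" for u
    by (auto simp: restr_def)
  have T: "koszul_homology_nonzero (coord_ring n Y) smul (\<lambda>i. restr Y (q i) - restr Y (\<lambda>v. a i)) m m \<longleftrightarrow>
    (\<exists>u\<in>coord_ring n Y. u \<noteq> 0 \<and> (\<forall>i<m. \<forall>v. (restr Y (q i) - restr Y (\<lambda>v. a i)) v * u v = 0))"
    by (rule top_nonzero_iff) (rule y)
  have "a \<in> point_spectrum (coord_ring n Y) smul (\<lambda>c. restr Y (\<lambda>v. c)) (\<lambda>j. restr Y (q j)) m \<longleftrightarrow>
     a \<in> kspace m \<and> koszul_homology_nonzero (coord_ring n Y) smul (\<lambda>i. restr Y (q i) - restr Y (\<lambda>v. a i)) m m"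
    unfolding point_spectrum_def by simp
  also have "\<dots> \<longleftrightarrow> a \<in> kspace m \<and> (\<exists>u\<in>coord_ring n Y. u \<noteq> 0 \<and> (\<forall>j<m. \<forall>v\<in>Y. (q j v - a j) * u v = 0))"
    using T by (simp only: E)
  also have "\<dots> \<longleftrightarrow> a \<in> kspace m \<and> (\<exists>u\<in>coord_ring n Y. (\<exists>v\<in>Y. u v \<noteq> 0) \<and> (\<forall>j<m. \<forall>v\<in>Y. (q j v - a j) * u v = 0))"
  proof -
    have "(\<exists>u\<in>coord_ring n Y. u \<noteq> 0 \<and> (\<forall>j<m. \<forall>v\<in>Y. (q j v - a j) * u v = 0)) \<longleftrightarrow>
          (\<exists>u\<in>coord_ring n Y. (\<exists>v\<in>Y. u v \<noteq> 0) \<and> (\<forall>j<m. \<forall>v\<in>Y. (q j v - a j) * u v = 0))"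
      by (rule bex_cong[OF refl]) (simp only: coord_ring_nonzero)
    then show ?thesis by (rule arg_cong)
  qed
  finally show ?thesis .
qed



lemma separate:
  fixes v0 :: "nat \<Rightarrow> 'k::field"
  assumes "finite W" "W \<subseteq> kspace n" "v0 \<in> kspace n" "v0 \<notin> W"
  shows "\<exists>h\<in>polyfun n. h v0 \<noteq> 0 \<and> (\<forall>w\<in>W. h w = 0)"
  using assms
proof (induction W rule: finite_induct)
  case empty
  show ?case by (intro bexI[of _ "\<lambda>v. 1"]) (auto intro: polyfun.const)
next
  case (insert w W)
  then obtain h where h: "h \<in> polyfun n" "h v0 \<noteq> 0" "\<forall>w\<in>W. h w = 0" by auto
  have "w \<noteq> v0" "w \<in> kspace n" using insert.prems by auto
  have "\<exists>i<n. w i \<noteq> v0 i"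
  proof (rule ccontr)
    assume "\<not> ?thesis"
    then have "w = v0" using \<open>w \<in> kspace n\<close> insert.prems(2) by (auto simp: kspace_def intro!: ext) (metis not_le)
    then show False using \<open>w \<noteq> v0\<close> by simp
  qed
  then obtain i where i: "i < n" "w i \<noteq> v0 i" by blast
  show ?case
  proof (intro bexI[of _ "\<lambda>v. h v * (v i - w i)"] conjI ballI)
    show "(\<lambda>v. h v * (v i - w i)) \<in> polyfun n"
      by (intro polyfun.mult h(1) polyfun_diff polyfun.intros i)
    show "h v0 * (v0 i - w i) \<noteq> 0" using h(2) i(2) by simp
    fix x assume "x \<in> insert w W"
    then show "h x * (x i - w i) = 0" using h(3) by auto
  qed
qed

lemma finite_grid:
  assumes "\<And>i. i < n \<Longrightarrow> finite (B i)"
  shows "finite {v :: nat \<Rightarrow> 'a::zero. (\<forall>i<n. v i \<in> B i) \<and> (\<forall>i\<ge>n. v i = 0)}"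
proof -
  have "{v :: nat \<Rightarrow> 'a. (\<forall>i<n. v i \<in> B i) \<and> (\<forall>i\<ge>n. v i = 0)}
      \<subseteq> (\<lambda>f i. if i < n then f i else 0) ` (\<Pi>\<^sub>E i \<in> {..<n}. B i)"
  proof
    fix v :: "nat \<Rightarrow> 'a" assume v: "v \<in> {v. (\<forall>i<n. v i \<in> B i) \<and> (\<forall>i\<ge>n. v i = 0)}"
    have "v = (\<lambda>i. if i < n then restrict v {..<n} i else 0)" using v by (auto intro!: ext)
    moreover have "restrict v {..<n} \<in> (\<Pi>\<^sub>E i \<in> {..<n}. B i)" using v by auto
    ultimately show "v \<in> (\<lambda>f i. if i < n then f i else 0) ` (\<Pi>\<^sub>E i \<in> {..<n}. B i)" by blast
  qed
  moreover have "finite (\<Pi>\<^sub>E i \<in> {..<n}. B i)" by (rule finite_PiE) (auto intro: assms)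
  ultimately show ?thesis by (rule finite_subset[OF _ finite_imageI])
qed

lemma alg_sub_kspace: "Y = zero_set n F \<Longrightarrow> Y \<subseteq> kspace n"
  by (auto simp: zero_set_def)

lemma isolated_witness:
  fixes Y :: "(nat \<Rightarrow> 'k::comm_ring_1) set"
  assumes "y0 \<in> isolated_points n Y" "Y \<subseteq> kspace n"
  obtains f where "f \<in> polyfun n" "f y0 \<noteq> 0" "\<And>v. v \<in> Y \<Longrightarrow> v \<noteq> y0 \<Longrightarrow> f v = 0"
proof -
  from assms obtain F' where F': "F' \<subseteq> polyfun n" "Y - {y0} = zero_set n F'" "y0 \<in> Y"
    unfolding isolated_points_def algebraic_set_def by blast
  have "y0 \<notin> zero_set n F'" using F'(2) by blast
  then obtain f where "f \<in> F'" "f y0 \<noteq> 0" using F'(3) assms(2) by (auto simp: zero_set_def)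
  moreover have "\<And>v. v \<in> Y \<Longrightarrow> v \<noteq> y0 \<Longrightarrow> f v = 0" using F'(2) \<open>f \<in> F'\<close> by (auto simp: zero_set_def)
  ultimately show ?thesis using that F'(1) by blast
qed



lemma isolated_of_support:
  fixes Y :: "(nat \<Rightarrow> 'k::field) set"
  assumes F: "F \<subseteq> polyfun n" "Y = zero_set n F"
    and p: "p \<in> polyfun n" and v0: "v0 \<in> Y" "p v0 \<noteq> 0"
    and fin: "finite {v \<in> Y. p v \<noteq> 0}"
  shows "v0 \<in> isolated_points n Y"
proof -
  have Yk: "Y \<subseteq> kspace n" using alg_sub_kspace[OF F(2)] .
  let ?W = "{v \<in> Y. p v \<noteq> 0} - {v0}"
  obtain h where h: "h \<in> polyfun n" "h v0 \<noteq> 0" "\<forall>w\<in>?W. h w = 0"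
    using separate[of ?W n v0] fin Yk v0 by auto
  have "Y - {v0} = zero_set n (insert (\<lambda>v. p v * h v) F)"
  proof
    show "Y - {v0} \<subseteq> zero_set n (insert (\<lambda>v. p v * h v) F)"
    proof
      fix v assume v: "v \<in> Y - {v0}"
      then have "p v * h v = 0" using h(3) by (cases "p v = 0") auto
      then show "v \<in> zero_set n (insert (\<lambda>v. p v * h v) F)" using v F(2) by (auto simp: zero_set_def)
    qed
    show "zero_set n (insert (\<lambda>v. p v * h v) F) \<subseteq> Y - {v0}"
      using F(2) v0(2) h(2) by (auto simp: zero_set_def)
  qed
  moreover have "insert (\<lambda>v. p v * h v) F \<subseteq> polyfun n" using F(1) p h(1) by (auto intro: polyfun.mult)
  ultimately show ?thesis using v0(1) unfolding isolated_points_def algebraic_set_def by blast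
qed

lemma pspec_q:
  fixes Y :: "(nat \<Rightarrow> 'k::field) set" and q :: "nat \<Rightarrow> (nat \<Rightarrow> 'k) \<Rightarrow> 'k" and m :: nat
  assumes ac: "alg_closed TYPE('k)"
    and F: "F \<subseteq> polyfun n" "Y = zero_set n F"
    and q: "\<forall>j<m. q j \<in> polyfun n"
    and int: "integral_over Y (coord_ring n Y) (gen_subalg n Y m q)"
  shows "point_spectrum (coord_ring n Y) smul (\<lambda>c. restr Y (\<lambda>v. c)) (\<lambda>j. restr Y (q j)) m
      = polymap m q ` isolated_points n Y"
proof (rule set_eqI)
  fix a
  have Yk: "Y \<subseteq> kspace n" using alg_sub_kspace[OF F(2)] .
  show "a \<in> point_spectrum (coord_ring n Y) smul (\<lambda>c. restr Y (\<lambda>v. c)) (\<lambda>j. restr Y (q j)) m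
      \<longleftrightarrow> a \<in> polymap m q ` isolated_points n Y"
    unfolding pspec_char[OF q]
  proof
    assume "a \<in> kspace m \<and> (\<exists>u\<in>coord_ring n Y. (\<exists>v\<in>Y. u v \<noteq> 0) \<and> (\<forall>j<m. \<forall>v\<in>Y. (q j v - a j) * u v = 0))"
    then obtain u v0 where a: "a \<in> kspace m" and u: "u \<in> coord_ring n Y" and v0: "v0 \<in> Y" "u v0 \<noteq> 0"
      and rel: "\<And>j v. j < m \<Longrightarrow> v \<in> Y \<Longrightarrow> (q j v - a j) * u v = 0" by blast
    obtain p where p: "p \<in> polyfun n" "u = restr Y p" using u unfolding coord_ring_def by blast
    have fib: "polymap m q v = a" if "v \<in> Y" "p v \<noteq> 0" for v
    proof (rule ext)
      fix j show "polymap m q v j = a j"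
      proof (cases "j < m")
        case True
        have "(q j v - a j) * p v = 0" using rel[OF True that(1)] p(2) that(1) by (simp add: restr_def)
        then show ?thesis using True that(2) by (simp add: polymap_def)
      next
        case False then show ?thesis using a by (simp add: polymap_def kspace_def)
      qed
    qed
    have "\<forall>k<n. \<exists>bs. (\<lambda>v. \<Prod>b\<leftarrow>bs. (v k - b)) \<in> ideal_on n Y ((\<lambda>j v. q j v - a j) ` {..<m})"
      using coord_in_ideal[OF ac q int] by blast
    then have "\<forall>k. \<exists>bs. k < n \<longrightarrow> (\<lambda>v. \<Prod>b\<leftarrow>bs. (v k - b)) \<in> ideal_on n Y ((\<lambda>j v. q j v - a j) ` {..<m})"
      by blast
    then obtain BS where BS0: "\<forall>k. k < n \<longrightarrow> (\<lambda>v. \<Prod>b\<leftarrow>BS k. (v k - b)) \<in> ideal_on n Y ((\<lambda>j v. q j v - a j) ` {..<m})"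
      by (rule choice[THEN exE])
    then have BS: "\<And>k. k < n \<Longrightarrow> (\<lambda>v. \<Prod>b\<leftarrow>BS k. (v k - b)) \<in> ideal_on n Y ((\<lambda>j v. q j v - a j) ` {..<m})"
      by blast
    have "{v \<in> Y. p v \<noteq> 0} \<subseteq> {v. (\<forall>k<n. v k \<in> set (BS k)) \<and> (\<forall>k\<ge>n. v k = 0)}"
    proof
      fix v assume v: "v \<in> {v \<in> Y. p v \<noteq> 0}"
      have gv: "\<forall>g\<in>(\<lambda>j v. q j v - a j) ` {..<m}. g v = 0"
      proof
        fix g assume "g \<in> (\<lambda>j v. q j v - a j) ` {..<m}"
        then obtain j where j: "j < m" "g = (\<lambda>v. q j v - a j)" by auto
        have "polymap m q v j = a j" using fib v by auto
        then show "g v = 0" using j by (simp add: polymap_def)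
      qed
      have "v k \<in> set (BS k)" if k: "k < n" for k
      proof -
        have vY: "v \<in> Y" using v by simp
        have "(\<Prod>b\<leftarrow>BS k. (v k - b)) = 0" by (rule ideal_vanish[OF BS[OF k] vY gv])
        then show ?thesis by (auto simp: prod_list_zero_iff)
      qed
      moreover have "\<forall>k\<ge>n. v k = 0" using v Yk by (auto simp: kspace_def)
      ultimately show "v \<in> {v. (\<forall>k<n. v k \<in> set (BS k)) \<and> (\<forall>k\<ge>n. v k = 0)}" by blast
    qed
    moreover have "finite {v. (\<forall>k<n. v k \<in> set (BS k)) \<and> (\<forall>k\<ge>n. v k = 0)}"
      by (rule finite_grid[of n "\<lambda>k. set (BS k)"]) simp
    ultimately have fin: "finite {v \<in> Y. p v \<noteq> 0}" by (rule finite_subset)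
    have pv0: "p v0 \<noteq> 0" using v0 p(2) by (simp add: restr_def)
    have "v0 \<in> isolated_points n Y" by (rule isolated_of_support[OF F p(1) v0(1) pv0 fin])
    moreover have "a = polymap m q v0" using fib[OF v0(1) pv0] by simp
    ultimately show "a \<in> polymap m q ` isolated_points n Y" by blast
  next
    assume "a \<in> polymap m q ` isolated_points n Y"
    then obtain y0 where y0: "y0 \<in> isolated_points n Y" "a = polymap m q y0" by blast
    obtain f where f: "f \<in> polyfun n" "f y0 \<noteq> 0" "\<And>v. v \<in> Y \<Longrightarrow> v \<noteq> y0 \<Longrightarrow> f v = 0"
      using isolated_witness[OF y0(1) Yk] by blast
    have y0Y: "y0 \<in> Y" using y0(1) by (simp add: isolated_points_def)
    have "a \<in> kspace m" using y0(2) by (simp add: kspace_def polymap_def)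
    moreover have "restr Y f \<in> coord_ring n Y" by (rule restr_in[OF f(1)])
    moreover have "\<exists>v\<in>Y. restr Y f v \<noteq> 0" using y0Y f(2) by (auto simp: restr_def)
    moreover have "\<forall>j<m. \<forall>v\<in>Y. (q j v - a j) * restr Y f v = 0"
      using f(3) y0(2) by (auto simp: restr_def polymap_def)
    ultimately show "a \<in> kspace m \<and> (\<exists>u\<in>coord_ring n Y. (\<exists>v\<in>Y. u v \<noteq> 0) \<and> (\<forall>j<m. \<forall>v\<in>Y. (q j v - a j) * u v = 0))"
      by blast
  qed
qed

lemma pspec_coords:
  fixes Y :: "(nat \<Rightarrow> 'k::field) set"
  assumes F: "F \<subseteq> polyfun n" "Y = zero_set n F"
  shows "point_spectrum (coord_ring n Y) smul (\<lambda>c. restr Y (\<lambda>v. c)) (\<lambda>i. restr Y (\<lambda>v. v i)) n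
      = isolated_points n Y"
proof (rule set_eqI)
  fix a
  have Yk: "Y \<subseteq> kspace n" using alg_sub_kspace[OF F(2)] .
  have q: "\<forall>j<n. (\<lambda>i v. v i) j \<in> polyfun n" by (auto intro: polyfun.var)
  show "a \<in> point_spectrum (coord_ring n Y) smul (\<lambda>c. restr Y (\<lambda>v. c)) (\<lambda>i. restr Y (\<lambda>v. v i)) n
      \<longleftrightarrow> a \<in> isolated_points n Y"
    unfolding pspec_char[OF q]
  proof
    assume "a \<in> kspace n \<and> (\<exists>u\<in>coord_ring n Y. (\<exists>v\<in>Y. u v \<noteq> 0) \<and> (\<forall>j<n. \<forall>v\<in>Y. (v j - a j) * u v = 0))"
    then obtain u v0 where a: "a \<in> kspace n" and u: "u \<in> coord_ring n Y" and v0: "v0 \<in> Y" "u v0 \<noteq> 0"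
      and rel: "\<And>j v. j < n \<Longrightarrow> v \<in> Y \<Longrightarrow> (v j - a j) * u v = 0" by blast
    obtain p where p: "p \<in> polyfun n" "u = restr Y p" using u unfolding coord_ring_def by blast
    have fib: "v = a" if "v \<in> Y" "p v \<noteq> 0" for v
    proof (rule ext)
      fix j show "v j = a j"
      proof (cases "j < n")
        case True
        have "(v j - a j) * p v = 0" using rel[OF True that(1)] p(2) that(1) by (simp add: restr_def)
        then show ?thesis using that(2) by simp
      next
        case False then show ?thesis using a that(1) Yk by (auto simp: kspace_def)
      qed
    qed
    have pv0: "p v0 \<noteq> 0" using v0 p(2) by (simp add: restr_def)
    have "{v \<in> Y. p v \<noteq> 0} \<subseteq> {a}" using fib by auto
    then have fin: "finite {v \<in> Y. p v \<noteq> 0}" by (rule finite_subset) simp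
    have "v0 \<in> isolated_points n Y" by (rule isolated_of_support[OF F p(1) v0(1) pv0 fin])
    then show "a \<in> isolated_points n Y" using fib[OF v0(1) pv0] by simp
  next
    assume y0: "a \<in> isolated_points n Y"
    obtain f where f: "f \<in> polyfun n" "f a \<noteq> 0" "\<And>v. v \<in> Y \<Longrightarrow> v \<noteq> a \<Longrightarrow> f v = 0"
      using isolated_witness[OF y0 Yk] by blast
    have y0Y: "a \<in> Y" using y0 by (simp add: isolated_points_def)
    have "a \<in> kspace n" using y0Y Yk by blast
    moreover have "restr Y f \<in> coord_ring n Y" by (rule restr_in[OF f(1)])
    moreover have "\<exists>v\<in>Y. restr Y f v \<noteq> 0" using y0Y f(2) by (auto simp: restr_def)
    moreover have "\<forall>j<n. \<forall>v\<in>Y. (v j - a j) * restr Y f v = 0"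
      using f(3) by (auto simp: restr_def)
    ultimately show "a \<in> kspace n \<and> (\<exists>u\<in>coord_ring n Y. (\<exists>v\<in>Y. u v \<noteq> 0) \<and> (\<forall>j<n. \<forall>v\<in>Y. (v j - a j) * u v = 0))"
      by blast
  qed
qed



lemma tspec_q:
  fixes Y :: "(nat \<Rightarrow> 'k::field) set" and q :: "nat \<Rightarrow> (nat \<Rightarrow> 'k) \<Rightarrow> 'k" and m :: nat
  assumes ac: "alg_closed TYPE('k)"
    and F: "F \<subseteq> polyfun n" "Y = zero_set n F"
    and q: "\<forall>j<m. q j \<in> polyfun n"
    and int: "integral_over Y (coord_ring n Y) (gen_subalg n Y m q)"
  shows "taylor_spectrum (coord_ring n Y) smul (\<lambda>c. restr Y (\<lambda>v. c)) (\<lambda>j. restr Y (q j)) m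
      = polymap m q ` Y"
proof (rule set_eqI)
  fix a
  let ?M = "coord_ring n Y"
  let ?y = "\<lambda>i. restr Y (q i) - restr Y (\<lambda>v. a i)"
  have y: "\<And>i. i < m \<Longrightarrow> ?y i \<in> ?M" using q by (auto intro: ydiff_in)
  have TS: "a \<in> taylor_spectrum ?M smul (\<lambda>c. restr Y (\<lambda>v. c)) (\<lambda>j. restr Y (q j)) m \<longleftrightarrow>
      a \<in> kspace m \<and> \<not> koszul_exact ?M smul ?y m"
    by (simp add: taylor_spectrum_def)
  show "a \<in> taylor_spectrum ?M smul (\<lambda>c. restr Y (\<lambda>v. c)) (\<lambda>j. restr Y (q j)) m \<longleftrightarrow> a \<in> polymap m q ` Y"
    unfolding TS
  proof
    assume A: "a \<in> kspace m \<and> \<not> koszul_exact ?M smul ?y m"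
    show "a \<in> polymap m q ` Y"
    proof (rule ccontr)
      assume na: "a \<notin> polymap m q ` Y"
      have "(\<lambda>v. 1) \<in> ideal_on n Y ((\<lambda>j v. q j v - a j) ` {..<m})"
        by (rule nullstellensatz_q[OF ac F q int]) (use A na in auto)
      then obtain c where c: "\<forall>j<m. c j \<in> polyfun n" "\<forall>v\<in>Y. 1 = (\<Sum>j<m. c j v * (q j v - a j))"
        using ideal_extract[of "\<lambda>v. 1" n Y "\<lambda>j v. q j v - a j" m] by auto
      have G: "\<And>i. i < m \<Longrightarrow> restr Y (c i) \<in> ?M" using c(1) by (auto intro: restr_in)
      have unit: "(\<Sum>i<m. restr Y (c i) v * ?y i v) = 1" if v: "v \<in> Y" for v
        using c(2) v by (simp add: restr_def)
      have "koszul_cycles ?M smul ?y m p = koszul_boundaries ?M smul ?y m p" for p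
        by (rule exact_of_unit[OF y G unit])
      then have "koszul_exact ?M smul ?y m" by (simp add: koszul_exact_def koszul_homology_nonzero_def)
      then show False using A by simp
    qed
  next
    assume "a \<in> polymap m q ` Y"
    then obtain y0 where y0: "y0 \<in> Y" "a = polymap m q y0" by blast
    have ak: "a \<in> kspace m" using y0(2) by (simp add: kspace_def polymap_def)
    define e :: "(nat \<Rightarrow> 'k) \<Rightarrow> 'k" where "e = restr Y (\<lambda>v. 1)"
    define c0 where "c0 S = (if S = {} then e else 0)" for S :: "nat set"
    have eM: "e \<in> ?M" unfolding e_def by (rule restr_in[OF polyfun.const])
    have c0ch: "c0 \<in> kchains ?M m 0"
      using eM coord_ring_0 by (auto simp: kchains_def c0_def)
    have "kd smul ?y m c0 = (\<lambda>_. 0)"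
    proof (rule ext)+
      fix S v
      have "kds (\<lambda>i. ?y i v) m (\<lambda>T. c0 T v) S = 0"
        unfolding kds_def by (auto simp: c0_def intro!: sum.neutral)
      then show "kd smul ?y m c0 S v = (\<lambda>_. 0) S v" by (simp add: kd_apply)
    qed
    then have cyc: "c0 \<in> koszul_cycles ?M smul ?y m 0" using c0ch by (simp add: koszul_cycles_def)
    have "c0 \<notin> koszul_boundaries ?M smul ?y m 0"
    proof
      assume "c0 \<in> koszul_boundaries ?M smul ?y m 0"
      then obtain c where "c0 = kd smul ?y m c" by (auto simp: koszul_boundaries_def)
      then have "c0 {} y0 = kds (\<lambda>i. ?y i y0) m (\<lambda>T. c T y0) {}" by (simp add: kd_apply)
      also have "\<dots> = 0"
        unfolding kds_def using y0 by (auto simp: restr_def polymap_def intro!: sum.neutral)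
      finally show False using y0(1) by (simp add: c0_def e_def restr_def)
    qed
    then have "koszul_homology_nonzero ?M smul ?y m 0"
      using cyc unfolding koszul_homology_nonzero_def by blast
    then show "a \<in> kspace m \<and> \<not> koszul_exact ?M smul ?y m" using ak by (auto simp: koszul_exact_def)
  qed
qed

theorem corollary3p9:
  fixes Y :: "(nat \<Rightarrow> 'k::field) set" and n :: nat
  assumes "alg_closed TYPE('k)"
    and "algebraic_set n Y"
  shows "point_spectrum (coord_ring n Y) (\<lambda>f g v. f v * g v) (\<lambda>c. restr Y (\<lambda>v. c))
           (\<lambda>i. restr Y (\<lambda>v. v i)) n = isolated_points n Y
    \<and> (\<forall>(m::nat) (q :: nat \<Rightarrow> (nat \<Rightarrow> 'k) \<Rightarrow> 'k).
          (\<forall>j<m. q j \<in> polyfun n) \<and> integral_over Y (coord_ring n Y) (gen_subalg n Y m q) \<longrightarrow>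
          taylor_spectrum (coord_ring n Y) (\<lambda>f g v. f v * g v) (\<lambda>c. restr Y (\<lambda>v. c))
             (\<lambda>j. restr Y (q j)) m = polymap m q ` Y
        \<and> point_spectrum (coord_ring n Y) (\<lambda>f g v. f v * g v) (\<lambda>c. restr Y (\<lambda>v. c))
             (\<lambda>j. restr Y (q j)) m = polymap m q ` isolated_points n Y)"
proof -
  obtain F where F: "F \<subseteq> polyfun n" "Y = zero_set n F"
    using assms(2) unfolding algebraic_set_def by blast
  show ?thesis
    using pspec_coords[OF F] tspec_q[OF assms(1) F] pspec_q[OF assms(1) F] by blast
qed

end
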